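(* Let $A\in\mathbb C^{d\times d}$ be non-invertible and $b\in\mathbb C^d$ be such that $C_{Az+b}$ is bounded on $\mathcal F(\mathbb C^d)$. Then $C_{Az+b}$ is not cyclic.
   Context: $\mathcal F(\mathbb C^d)$ is the Fock space of entire functions with $\|f\|^2=(2\pi)^{-d}\int_{\mathbb C^d}|f|^2e^{-|z|^2/2}dA<\infty$; $C_\varphi f=f\circ\varphi$, bounded iff $\varphi(z)=Az+b$, $\|A\|\le1$, $\langle Av,b\rangle=0$ whenever $|Av|=|v|$. An operator $T$ is cyclic if some $x$ has $\mathrm{span}\{T^nx:n\ge0\}$ dense. *)

theory Defs
  imports "HOL-Analysis.Analysis"
begin

text \<open>Points of C^d are vectors of type complex^'d (d = CARD('d)).
  Lebesgue measure lborel on complex^'d is the 2d-dimensional Lebesgue (area) measure dA.\<close>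

definition clinear_map :: "(complex^'d \<Rightarrow> complex) \<Rightarrow> bool" where
  "clinear_map L \<longleftrightarrow> linear L \<and> (\<forall>c v. L (c *s v) = c * L v)"

definition entire_fun :: "(complex^'d \<Rightarrow> complex) \<Rightarrow> bool" where
  "entire_fun f \<longleftrightarrow> (\<forall>z. \<exists>L. clinear_map L \<and> (f has_derivative L) (at z))"

definition fock_sq :: "(complex^'d \<Rightarrow> complex) \<Rightarrow> ennreal" where
  "fock_sq f = ennreal ((2*pi) powr (- real CARD('d))) *
     (\<integral>\<^sup>+ z. ennreal ((cmod (f z))\<^sup>2 * exp (- (norm z)\<^sup>2 / 2)) \<partial>lborel)"

definition fock_space :: "(complex^'d \<Rightarrow> complex) set" where
  "fock_space = {f. entire_fun f \<and> fock_sq f < \<infinity>}"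

definition fock_norm :: "(complex^'d \<Rightarrow> complex) \<Rightarrow> real" where
  "fock_norm f = sqrt (enn2real (fock_sq f))"

definition bounded_comp_op :: "(complex^'d \<Rightarrow> complex^'d) \<Rightarrow> bool" where
  "bounded_comp_op \<phi> \<longleftrightarrow>
     (\<forall>f\<in>fock_space. f \<circ> \<phi> \<in> fock_space) \<and>
     (\<exists>M. \<forall>f\<in>fock_space. fock_norm (f \<circ> \<phi>) \<le> M * fock_norm f)"

definition cyclic_comp_op :: "(complex^'d \<Rightarrow> complex^'d) \<Rightarrow> bool" where
  "cyclic_comp_op \<phi> \<longleftrightarrow>
     (\<exists>x\<in>fock_space. \<forall>g\<in>fock_space. \<forall>\<epsilon>>0. \<exists>N (c::nat \<Rightarrow> complex).
        fock_norm (\<lambda>z. g z - (\<Sum>k<N. c k * x ((\<phi> ^^ k) z))) < \<epsilon>)"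

end

theory Submission
  imports Defs "HOL-Probability.Probability"
begin


lemma gauss1: "(\<integral>\<^sup>+x. ennreal (exp (- (x::real)\<^sup>2 / 4)) \<partial>lborel) < \<infinity>"
proof -
  have "integrable lborel (normal_density 0 (sqrt 2))" by simp
  hence "integrable lborel (\<lambda>x. sqrt (4*pi) * normal_density 0 (sqrt 2) x)" by simp
  moreover have "\<And>x. sqrt (4*pi) * normal_density 0 (sqrt 2) x = exp (- x\<^sup>2 / 4)"
    by (simp add: normal_density_def real_sqrt_mult)
  ultimately have "integrable lborel (\<lambda>x::real. exp (- x\<^sup>2 / 4))" by simp
  thus ?thesis by (simp add: integrable_iff_bounded)
qed

lemma gauss: "(\<integral>\<^sup>+z. ennreal (exp (- (norm (z::'a::euclidean_space))\<^sup>2 / 4)) \<partial>lborel) < \<infinity>"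
proof -
  have eq: "ennreal (exp (- (norm z)\<^sup>2 / 4)) = (\<Prod>b\<in>Basis. ennreal (exp (- (z \<bullet> b)\<^sup>2 / 4)))" for z :: 'a
  proof -
    have "(norm z)\<^sup>2 = z \<bullet> z" by (simp add: power2_norm_eq_inner)
    also have "\<dots> = (\<Sum>b\<in>Basis. (z \<bullet> b)\<^sup>2)"
      by (subst euclidean_inner) (simp add: power2_eq_square)
    finally have "(norm z)\<^sup>2 = (\<Sum>b\<in>Basis. (z \<bullet> b)\<^sup>2)" .
    hence "exp (- (norm z)\<^sup>2 / 4) = (\<Prod>b\<in>Basis. exp (- (z \<bullet> b)\<^sup>2 / 4))"
      by (simp add: exp_sum[symmetric] sum_negf sum_divide_distrib)
    thus ?thesis by (simp add: prod_ennreal)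
  qed
  have "(\<integral>\<^sup>+z. ennreal (exp (- (norm (z::'a))\<^sup>2 / 4)) \<partial>lborel) = (\<Prod>b\<in>(Basis::'a set). (\<integral>\<^sup>+x. ennreal (exp (- x\<^sup>2 / 4)) \<partial>lborel))"
    unfolding eq by (rule nn_integral_lborel_prod) auto
  also have "\<dots> < \<infinity>" using gauss1 by (simp add: less_top[symmetric] ennreal_prod_eq_top power_eq_top_ennreal)
  finally show ?thesis .
qed



lemma ker_exists:
  fixes A :: "complex^'d^'d"
  assumes "\<not> invertible A"
  shows "\<exists>v. v \<noteq> 0 \<and> A *v v = 0"
  using assms unfolding invertible_left_inverse matrix_left_invertible_ker by blast

lemma entire_cont: "entire_fun f \<Longrightarrow> continuous_on UNIV f"
  unfolding entire_fun_def
  by (meson continuous_at_imp_continuous_on has_derivative_continuous)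

lemma entire_lin: "entire_fun (\<lambda>z::complex^'d. z $ j)"
  unfolding entire_fun_def clinear_map_def
proof
  fix z :: "complex^'d"
  show "\<exists>L. (linear L \<and> (\<forall>c v. L (c *s v) = c * L v)) \<and> ((\<lambda>z. z $ j) has_derivative L) (at z)"
    by (rule exI[of _ "\<lambda>h. h $ j"])
       (auto intro: bounded_linear.linear bounded_linear_vec_nth bounded_linear_imp_has_derivative)
qed

lemma entire_sq: "entire_fun (\<lambda>z::complex^'d. (z $ j)\<^sup>2)"
  unfolding entire_fun_def clinear_map_def
proof
  fix z :: "complex^'d"
  have dj: "((\<lambda>z::complex^'d. z $ j) has_derivative (\<lambda>h. h $ j)) (at z)"
    by (rule bounded_linear_imp_has_derivative[OF bounded_linear_vec_nth])
  have d: "((\<lambda>z. z $ j * z $ j) has_derivative (\<lambda>h. z $ j * h $ j + h $ j * z $ j)) (at z)"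
    using has_derivative_mult[OF dj dj] .
  have l: "linear (\<lambda>h::complex^'d. z $ j * h $ j + h $ j * z $ j)"
    by (rule linearI) (auto simp: algebra_simps)
  show "\<exists>L. (linear L \<and> (\<forall>c v. L (c *s v) = c * L v)) \<and> ((\<lambda>z. (z $ j)\<^sup>2) has_derivative L) (at z)"
    by (rule exI[of _ "\<lambda>h. z $ j * h $ j + h $ j * z $ j"])
       (use d l in \<open>auto simp: power2_eq_square algebra_simps\<close>)
qed

definition fin :: "(complex^'d \<Rightarrow> complex) \<Rightarrow> bool" where
  "fin f \<longleftrightarrow> continuous_on UNIV f \<and> fock_sq f < \<infinity>"

lemma fock_fin: "f \<in> fock_space \<Longrightarrow> fin f"
  unfolding fock_space_def fin_def using entire_cont by blast

lemma cont_meas: "continuous_on UNIV (f::'a::euclidean_space \<Rightarrow> 'b::euclidean_space) \<Longrightarrow> f \<in> borel_measurable borel"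
  by (rule borel_measurable_continuous_onI)

lemma fin_add:
  assumes "fin f" "fin g"
  shows "fin (\<lambda>z. f z + g z)"
proof -
  have [measurable]: "f \<in> borel_measurable borel" "g \<in> borel_measurable borel"
    using assms cont_meas unfolding fin_def by auto
  let ?w = "\<lambda>z::complex^'d. exp (- (norm z)\<^sup>2 / 2)"
  have "(\<integral>\<^sup>+ z. ennreal ((cmod (f z + g z))\<^sup>2 * ?w z) \<partial>lborel)
      \<le> (\<integral>\<^sup>+ z. ennreal (2 * ((cmod (f z))\<^sup>2 * ?w z)) + ennreal (2 * ((cmod (g z))\<^sup>2 * ?w z)) \<partial>lborel)"
  proof (rule nn_integral_mono)
    fix z
    have "(cmod (f z + g z))\<^sup>2 \<le> (cmod (f z) + cmod (g z))\<^sup>2"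
      by (simp add: norm_triangle_ineq power_mono)
    also have "\<dots> \<le> 2 * (cmod (f z))\<^sup>2 + 2 * (cmod (g z))\<^sup>2"
    proof -
      have "0 \<le> (cmod (f z) - cmod (g z))\<^sup>2" by simp
      thus ?thesis unfolding power2_sum power2_diff by linarith
    qed
    finally have "(cmod (f z + g z))\<^sup>2 * ?w z \<le> (2 * (cmod (f z))\<^sup>2 + 2 * (cmod (g z))\<^sup>2) * ?w z"
      by (rule mult_right_mono) simp
    thus "ennreal ((cmod (f z + g z))\<^sup>2 * ?w z) \<le> ennreal (2 * ((cmod (f z))\<^sup>2 * ?w z)) + ennreal (2 * ((cmod (g z))\<^sup>2 * ?w z))"
      by (simp add: ennreal_plus[symmetric] algebra_simps del: ennreal_plus)
  qed
  also have "\<dots> = (\<integral>\<^sup>+ z. ennreal (2 * ((cmod (f z))\<^sup>2 * ?w z)) \<partial>lborel) + (\<integral>\<^sup>+ z. ennreal (2 * ((cmod (g z))\<^sup>2 * ?w z)) \<partial>lborel)"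
    by (rule nn_integral_add) auto
  also have "\<dots> = 2 * (\<integral>\<^sup>+ z. ennreal ((cmod (f z))\<^sup>2 * ?w z) \<partial>lborel) + 2 * (\<integral>\<^sup>+ z. ennreal ((cmod (g z))\<^sup>2 * ?w z) \<partial>lborel)"
    by (simp add: ennreal_mult nn_integral_cmult)
  also have "\<dots> < \<infinity>"
  proof -
    have "fock_sq f < \<infinity>" "fock_sq g < \<infinity>" using assms unfolding fin_def by auto
    hence "(\<integral>\<^sup>+ z. ennreal ((cmod (f z))\<^sup>2 * ?w z) \<partial>lborel) < \<infinity>"
          "(\<integral>\<^sup>+ z. ennreal ((cmod (g z))\<^sup>2 * ?w z) \<partial>lborel) < \<infinity>"
      unfolding fock_sq_def by (auto simp: ennreal_mult_less_top)
    thus ?thesis by (simp add: ennreal_mult_less_top)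
  qed
  finally have "fock_sq (\<lambda>z. f z + g z) < \<infinity>"
    unfolding fock_sq_def by (simp add: ennreal_mult_less_top)
  moreover have "continuous_on UNIV (\<lambda>z. f z + g z)"
    using assms unfolding fin_def by (intro continuous_intros) auto
  ultimately show ?thesis unfolding fin_def by simp
qed

lemma fin_mult:
  assumes "fin f"
  shows "fin (\<lambda>z. c * f z)"
proof -
  let ?w = "\<lambda>z::complex^'d. exp (- (norm z)\<^sup>2 / 2)"
  have [measurable]: "f \<in> borel_measurable borel"
    using assms cont_meas unfolding fin_def by auto
  have "(\<integral>\<^sup>+ z. ennreal ((cmod (c * f z))\<^sup>2 * ?w z) \<partial>lborel)
     = (\<integral>\<^sup>+ z. ennreal ((cmod c)\<^sup>2) * ennreal ((cmod (f z))\<^sup>2 * ?w z) \<partial>lborel)"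
    by (simp add: ennreal_mult[symmetric] norm_mult power_mult_distrib mult.assoc)
  also have "\<dots> = ennreal ((cmod c)\<^sup>2) * (\<integral>\<^sup>+ z. ennreal ((cmod (f z))\<^sup>2 * ?w z) \<partial>lborel)"
    by (rule nn_integral_cmult) auto
  finally have "fock_sq (\<lambda>z. c * f z) = ennreal ((cmod c)\<^sup>2) * fock_sq f"
    unfolding fock_sq_def by (simp add: mult.left_commute)
  hence "fock_sq (\<lambda>z. c * f z) < \<infinity>" using assms unfolding fin_def by (simp add: ennreal_mult_less_top)
  moreover have "continuous_on UNIV (\<lambda>z. c * f z)"
    using assms unfolding fin_def by (intro continuous_intros) auto
  ultimately show ?thesis unfolding fin_def by simp
qed

lemma fin_sum:
  fixes N :: nat and F :: "nat \<Rightarrow> complex^'d \<Rightarrow> complex"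
  assumes "\<And>k. k < N \<Longrightarrow> fin (F k)"
  shows "fin (\<lambda>z. \<Sum>k<N. c k * F k z)"
  using assms
proof (induction N)
  case 0
  have "fock_sq (\<lambda>z::complex^'d. 0::complex) = 0" unfolding fock_sq_def by simp
  thus ?case unfolding fin_def by simp
next
  case (Suc N)
  have "fin (\<lambda>z. (\<Sum>k<N. c k * F k z) + c N * F N z)"
    using Suc by (intro fin_add fin_mult) auto
  thus ?case by simp
qed

lemma exp_quart: "(y::real) \<ge> 0 \<Longrightarrow> y\<^sup>2 \<le> 4 * exp y"
proof -
  assume y: "y \<ge> 0"
  have "exp y = (exp (y/2))\<^sup>2" by (simp add: power2_eq_square exp_add[symmetric])
  moreover have "y/2 \<le> exp (y/2)" using exp_ge_add_one_self[of "y/2"] by linarith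
  hence "(y/2)\<^sup>2 \<le> (exp (y/2))\<^sup>2" using y by (intro power_mono) auto
  ultimately show ?thesis by (simp add: power2_eq_square)
qed

lemma fock_poly:
  fixes g :: "complex^'d \<Rightarrow> complex"
  assumes [measurable]: "g \<in> borel_measurable borel"
    and bd: "\<And>z. (cmod (g z))\<^sup>2 \<le> 1 + norm z ^ 4"
  shows "fock_sq g < \<infinity>"
proof -
  have "(\<integral>\<^sup>+ z. ennreal ((cmod (g z))\<^sup>2 * exp (- (norm z)\<^sup>2 / 2)) \<partial>lborel)
     \<le> (\<integral>\<^sup>+ z. ennreal 65 * ennreal (exp (- (norm (z::complex^'d))\<^sup>2 / 4)) \<partial>lborel)"
  proof (rule nn_integral_mono)
    fix z :: "complex^'d"
    let ?r = "(norm z)\<^sup>2"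
    have "?r\<^sup>2 \<le> 64 * exp (?r/4)" using exp_quart[of "?r/4"] by (simp add: power2_eq_square)
    hence "(cmod (g z))\<^sup>2 \<le> 65 * exp (?r/4)"
    proof -
      have "norm z ^ 4 = ?r\<^sup>2" by (simp flip: power_mult)
      moreover have "1 \<le> exp (?r/4)" by simp
      ultimately show ?thesis using bd[of z] \<open>?r\<^sup>2 \<le> 64 * exp (?r/4)\<close> by linarith
    qed
    hence "(cmod (g z))\<^sup>2 * exp (- ?r / 2) \<le> 65 * exp (?r/4) * exp (- ?r / 2)"
      by (rule mult_right_mono) simp
    also have "\<dots> = 65 * exp (- ?r / 4)" by (simp add: exp_add[symmetric] mult.assoc)
    finally have "ennreal ((cmod (g z))\<^sup>2 * exp (- ?r / 2)) \<le> ennreal (65 * exp (- ?r / 4))"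
      by (rule ennreal_leI)
    thus "ennreal ((cmod (g z))\<^sup>2 * exp (- ?r / 2)) \<le> ennreal 65 * ennreal (exp (- ?r / 4))"
      by (simp add: ennreal_mult)
  qed
  also have "\<dots> = ennreal 65 * (\<integral>\<^sup>+ z. ennreal (exp (- (norm (z::complex^'d))\<^sup>2 / 4)) \<partial>lborel)"
    by (rule nn_integral_cmult) auto
  also have "\<dots> < \<infinity>" using gauss[where 'a="complex^'d"] by (simp add: ennreal_mult_less_top)
  finally show ?thesis unfolding fock_sq_def by (simp add: ennreal_mult_less_top)
qed




lemma local_bound:
  fixes u :: "complex^'d"
  shows "\<exists>K. \<forall>f \<epsilon>. fin f \<longrightarrow> \<epsilon> > 0 \<longrightarrow> fock_norm f < \<epsilon> \<longrightarrow>
     integral (cbox (0::complex^'d) One) (\<lambda>z. cmod (f (z + u))) \<le> K * \<epsilon>"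
proof -
  define S where "S = cbox (0::complex^'d) One"
  obtain B where B: "\<And>z. z \<in> S \<Longrightarrow> norm z \<le> B"
    using bounded_cbox[of "0::complex^'d" One] unfolding S_def bounded_iff by blast
  define R where "R = B + norm u"
  define m where "m = exp (- R\<^sup>2 / 2)"
  have m0: "m > 0" unfolding m_def by simp
  define C where "C = (2*pi) powr (real CARD('d)) / m"
  define K where "K = (Henstock_Kurzweil_Integration.content S + C) / 2"
  show ?thesis
  proof (rule exI[of _ K], intro allI impI)
    fix f :: "complex^'d \<Rightarrow> complex" and \<epsilon> :: real
    assume fin: "fin f" and e0: "\<epsilon> > 0" and fn: "fock_norm f < \<epsilon>"
    have cf: "continuous_on UNIV f" and ff: "fock_sq f < \<infinity>" using fin unfolding fin_def by auto
    have [measurable]: "f \<in> borel_measurable borel" using cf by (rule cont_meas)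
    have cfu: "continuous_on UNIV (\<lambda>z. f (z + u))"
      by (rule continuous_on_compose2[OF cf]) (auto intro: continuous_intros)
    define h where "h = (\<lambda>z. (cmod (f (z + u)))\<^sup>2)"
    have ch: "continuous_on UNIV h" unfolding h_def by (intro continuous_intros cfu)
    have int1: "(\<lambda>z. cmod (f (z + u))) integrable_on S"
      unfolding S_def by (rule integrable_continuous) (intro continuous_intros continuous_on_subset[OF cfu], auto)
    have int2: "h integrable_on S"
      unfolding S_def by (rule integrable_continuous) (rule continuous_on_subset[OF ch], auto)
    define Q where "Q = integral S h"
    let ?w = "\<lambda>z::complex^'d. exp (- (norm z)\<^sup>2 / 2)"
    define N where "N = (\<integral>\<^sup>+ y. ennreal ((cmod (f y))\<^sup>2 * ?w y) \<partial>lborel)"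
    define c0 where "c0 = (2*pi) powr (- real CARD('d))"
    have c0: "c0 > 0" unfolding c0_def by simp
    have fsq: "fock_sq f = ennreal c0 * N" unfolding fock_sq_def N_def c0_def by simp
    have Nfin: "N < \<infinity>" using ff c0 unfolding fsq by (cases "N = 0") (auto simp: ennreal_mult_less_top)
    obtain nr where nr: "N = ennreal nr" "nr \<ge> 0"
      using Nfin by (cases N) auto
    have "fock_norm f = sqrt (c0 * nr)" unfolding fock_norm_def fsq nr
      using c0 nr by (simp add: ennreal_mult[symmetric] )
    hence "sqrt (c0 * nr) < sqrt (\<epsilon>\<^sup>2)" using fn e0 by simp
    hence "c0 * nr < \<epsilon>\<^sup>2" by (simp only: real_sqrt_less_iff)
    hence nr_bd: "nr < \<epsilon>\<^sup>2 * (2*pi) powr (real CARD('d))"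
      using c0 unfolding c0_def by (simp add: powr_minus field_simps)
    have "ennreal Q = (\<integral>\<^sup>+ z. ennreal (indicator S z * h z) \<partial>lborel)"
      unfolding Q_def by (rule nn_integral_has_integral_lebesgue[OF _ integrable_integral[OF int2], symmetric]) (simp add: h_def)
    also have "\<dots> \<le> (\<integral>\<^sup>+ z. ennreal (1/m) * ennreal (h z * ?w (z + u)) \<partial>lborel)"
    proof (rule nn_integral_mono)
      fix z
      show "ennreal (indicator S z * h z) \<le> ennreal (1/m) * ennreal (h z * ?w (z + u))"
      proof (cases "z \<in> S")
        case True
        have "norm (z + u) \<le> R" unfolding R_def using B[OF True] norm_triangle_ineq[of z u] by linarith
        hence "(norm (z+u))\<^sup>2 \<le> R\<^sup>2" by (simp add: power_mono)
        hence "m \<le> ?w (z + u)" unfolding m_def by simp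
        hence "h z * m \<le> h z * ?w (z + u)" by (intro mult_left_mono) (auto simp: h_def)
        hence "h z \<le> (1/m) * (h z * ?w (z + u))" using m0 by (simp add: field_simps)
        thus ?thesis using True m0 by (simp add: ennreal_mult[symmetric] h_def ennreal_leI)
      qed simp
    qed
    also have "\<dots> = ennreal (1/m) * (\<integral>\<^sup>+ z. ennreal (h z * ?w (z + u)) \<partial>lborel)"
      by (rule nn_integral_cmult) (auto simp: h_def)
    also have "(\<integral>\<^sup>+ z. ennreal (h z * ?w (z + u)) \<partial>lborel) = N"
    proof -
      have "N = (\<integral>\<^sup>+ y. ennreal ((cmod (f y))\<^sup>2 * ?w y) \<partial>(distr lborel borel ((+) u)))"
        unfolding N_def lborel_distr_plus ..
      also have "\<dots> = (\<integral>\<^sup>+ z. ennreal ((cmod (f (u + z)))\<^sup>2 * ?w (u + z)) \<partial>lborel)"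
        by (rule nn_integral_distr) auto
      finally show ?thesis by (simp add: h_def add.commute)
    qed
    finally have QN: "ennreal Q \<le> ennreal (1/m) * N" .
    have "ennreal (1/m) * N = ennreal (1/m * nr)" using m0 nr by (subst ennreal_mult) auto
    hence "ennreal Q \<le> ennreal (1/m * nr)" using QN by simp
    hence Qbd: "Q \<le> 1/m * nr" using m0 nr by (subst (asm) ennreal_le_iff) auto
    have Q2: "Q \<le> C * \<epsilon>\<^sup>2"
    proof -
      have "1/m * nr \<le> 1/m * (\<epsilon>\<^sup>2 * (2*pi) powr (real CARD('d)))"
        using nr_bd m0 by (intro mult_left_mono) auto
      thus ?thesis using Qbd unfolding C_def by (simp add: field_simps)
    qed
    have "integral S (\<lambda>z. cmod (f (z + u))) \<le> integral S (\<lambda>z. \<epsilon>/2 + h z * (1/(2*\<epsilon>)))"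
    proof (rule integral_le[OF int1])
      show "(\<lambda>z. \<epsilon>/2 + h z * (1/(2*\<epsilon>))) integrable_on S"
        using integrable_add[OF integrable_const[of "\<epsilon>/2" 0 One] integrable_on_mult_left[OF int2[unfolded S_def], of "1/(2*\<epsilon>)"]]
        unfolding S_def .
      fix z
      have "0 \<le> (cmod (f (z+u)) - \<epsilon>)\<^sup>2" by simp
      hence "2 * \<epsilon> * cmod (f (z+u)) \<le> \<epsilon>\<^sup>2 + h z" unfolding h_def by (simp add: power2_eq_square algebra_simps)
      thus "cmod (f (z + u)) \<le> \<epsilon>/2 + h z * (1/(2*\<epsilon>))" using e0 by (simp add: field_simps power2_eq_square)
    qed
    also have "\<dots> = Henstock_Kurzweil_Integration.content S * (\<epsilon>/2) + Q * (1/(2*\<epsilon>))"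
      unfolding Q_def using int2 unfolding S_def by (subst integral_add) (auto intro: integrable_on_divide)
    also have "\<dots> \<le> Henstock_Kurzweil_Integration.content S * (\<epsilon>/2) + C * \<epsilon>\<^sup>2 * (1/(2*\<epsilon>))"
      using Q2 e0 by (intro add_left_mono mult_right_mono) auto
    also have "\<dots> = K * \<epsilon>" unfolding K_def using e0 by (simp add: field_simps power2_eq_square)
    finally show "integral (cbox (0::complex^'d) One) (\<lambda>z. cmod (f (z + u))) \<le> K * \<epsilon>" unfolding S_def .
  qed
qed




lemma alg:
  fixes \<alpha> \<beta> \<gamma> p q :: complex
  assumes a0: "\<alpha> \<noteq> 0" and g0: "\<gamma> \<noteq> 0"
   and h1: "\<And>\<delta>. \<delta> > 0 \<Longrightarrow> \<exists>c. cmod (\<alpha> - c*p) \<le> \<delta> \<and> cmod (c*q) \<le> \<delta>"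
   and h2: "\<And>\<delta>. \<delta> > 0 \<Longrightarrow> \<exists>c. cmod (\<beta> - c*p) \<le> \<delta> \<and> cmod (\<gamma> - c*q) \<le> \<delta>"
  shows False
proof -
  define a where "a = cmod \<alpha>"
  define g where "g = cmod \<gamma>"
  define bb where "bb = cmod \<beta>"
  have a: "a > 0" and g: "g > 0" and bb: "bb \<ge> 0" using a0 g0 by (auto simp: a_def g_def bb_def)
  define \<delta> where "\<delta> = min (min (a/2) (g/2)) (a*g/(8*(bb+a)))"
  have d0: "\<delta> > 0" unfolding \<delta>_def using a g bb by auto
  obtain c1 where c1: "cmod (\<alpha> - c1*p) \<le> \<delta>" "cmod (c1*q) \<le> \<delta>" using h1[OF d0] by blast
  obtain c2 where c2: "cmod (\<beta> - c2*p) \<le> \<delta>" "cmod (\<gamma> - c2*q) \<le> \<delta>" using h2[OF d0] by blast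
  have "a \<le> cmod (c1*p) + cmod (\<alpha> - c1*p)" unfolding a_def using norm_triangle_ineq[of "c1*p" "\<alpha> - c1*p"] by simp
  hence A1: "cmod (c1*p) \<ge> a/2" using c1 unfolding \<delta>_def by linarith
  have "g \<le> cmod (c2*q) + cmod (\<gamma> - c2*q)" unfolding g_def using norm_triangle_ineq[of "c2*q" "\<gamma> - c2*q"] by simp
  hence B2: "cmod (c2*q) \<ge> g/2" using c2 unfolding \<delta>_def by linarith
  have "cmod (c2*p) \<le> bb + cmod (c2*p - \<beta>)" unfolding bb_def using norm_triangle_ineq[of "\<beta>" "c2*p - \<beta>"] by simp
  hence A2: "cmod (c2*p) \<le> bb + \<delta>" using c2 by (simp add: norm_minus_commute)
  have eq: "cmod (c1*p) * cmod (c2*q) = cmod (c2*p) * cmod (c1*q)" by (simp add: norm_mult mult_ac)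
  have "(a/2) * (g/2) \<le> cmod (c1*p) * cmod (c2*q)" using A1 B2 a g by (intro mult_mono) auto
  also have "\<dots> = cmod (c2*p) * cmod (c1*q)" by (rule eq)
  also have "\<dots> \<le> (bb + \<delta>) * \<delta>" using A2 c1 d0 bb by (intro mult_mono) auto
  also have "\<dots> \<le> (bb + a) * \<delta>" using d0 unfolding \<delta>_def by (intro mult_right_mono) auto
  also have "\<dots> \<le> (bb + a) * (a*g/(8*(bb+a)))" using a bb unfolding \<delta>_def by (intro mult_left_mono) auto
  also have "\<dots> = a*g/8" using a bb by (simp add: field_simps)
  finally have "(a/2) * (g/2) \<le> a*g/8" .
  moreover have "(a/2) * (g/2) = a*g/4" by simp
  moreover have "a*g > 0" using a g by simp
  ultimately show False by linarith
qed

lemma ell_bound: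
  fixes u v :: "complex^'d"
  shows "\<exists>M. \<forall>F \<epsilon>. fin F \<longrightarrow> \<epsilon> > 0 \<longrightarrow> fock_norm F < \<epsilon> \<longrightarrow>
     cmod (integral (cbox (0::complex^'d) One) (\<lambda>z. F (z + u) - F (z + u + v))) \<le> M * \<epsilon>"
proof -
  define S where "S = cbox (0::complex^'d) One"
  obtain K1 where K1: "\<And>f \<epsilon>. fin f \<Longrightarrow> \<epsilon> > 0 \<Longrightarrow> fock_norm f < \<epsilon> \<Longrightarrow>
     integral S (\<lambda>z. cmod (f (z + u))) \<le> K1 * \<epsilon>" using local_bound[of u] unfolding S_def by blast
  obtain K2 where K2: "\<And>f \<epsilon>. fin f \<Longrightarrow> \<epsilon> > 0 \<Longrightarrow> fock_norm f < \<epsilon> \<Longrightarrow>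
     integral S (\<lambda>z. cmod (f (z + (u + v)))) \<le> K2 * \<epsilon>" using local_bound[of "u+v"] unfolding S_def by blast
  show ?thesis
  proof (rule exI[of _ "K1 + K2"], intro allI impI)
    fix F :: "complex^'d \<Rightarrow> complex" and \<epsilon> :: real
    assume fin: "fin F" and e: "\<epsilon> > 0" and n: "fock_norm F < \<epsilon>"
    have cF: "continuous_on UNIV F" using fin unfolding fin_def by auto
    have c1: "continuous_on UNIV (\<lambda>z. F (z + u))"
      by (rule continuous_on_compose2[OF cF]) (auto intro: continuous_intros)
    have c2: "continuous_on UNIV (\<lambda>z. F (z + (u + v)))"
      by (rule continuous_on_compose2[OF cF]) (auto intro: continuous_intros)
    have i1: "(\<lambda>z. cmod (F (z + u))) integrable_on S" unfolding S_def
      by (rule integrable_continuous) (intro continuous_intros continuous_on_subset[OF c1], auto)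
    have i2: "(\<lambda>z. cmod (F (z + (u + v)))) integrable_on S" unfolding S_def
      by (rule integrable_continuous) (intro continuous_intros continuous_on_subset[OF c2], auto)
    have i3: "(\<lambda>z. F (z + u) - F (z + (u + v))) integrable_on S" unfolding S_def
      by (rule integrable_continuous) (intro continuous_intros continuous_on_subset[OF c1] continuous_on_subset[OF c2], auto)
    have "cmod (integral S (\<lambda>z. F (z + u) - F (z + (u + v)))) \<le> integral S (\<lambda>z. cmod (F (z + u)) + cmod (F (z + (u + v))))"
      by (rule integral_norm_bound_integral[OF i3 integrable_add[OF i1 i2]]) (simp add: norm_triangle_ineq4)
    also have "\<dots> = integral S (\<lambda>z. cmod (F (z + u))) + integral S (\<lambda>z. cmod (F (z + (u + v))))"
      by (rule integral_add[OF i1 i2])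
    also have "\<dots> \<le> K1 * \<epsilon> + K2 * \<epsilon>" using K1[OF fin e n] K2[OF fin e n] by linarith
    finally show "cmod (integral (cbox (0::complex^'d) One) (\<lambda>z. F (z + u) - F (z + u + v))) \<le> (K1 + K2) * \<epsilon>"
      unfolding S_def by (simp add: add.assoc distrib_right)
  qed
qed

lemma sum_shift:
  fixes \<phi> :: "'a::ab_group_add \<Rightarrow> 'a" and x :: "'a \<Rightarrow> complex"
  assumes inv: "\<And>y. \<phi> (y + v) = \<phi> y"
  shows "(\<Sum>k<N. c k * x ((\<phi> ^^ k) (y + v))) =
         (\<Sum>k<N. c k * x ((\<phi> ^^ k) y)) - (if N = 0 then 0 else c 0 * (x y - x (y + v)))"
proof (induction N)
  case 0 then show ?case by simp
next
  case (Suc N)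
  show ?case
  proof (cases N)
    case 0 then show ?thesis by (simp add: algebra_simps)
  next
    case (Suc k)
    have "(\<phi> ^^ N) (y + v) = (\<phi> ^^ N) y" unfolding Suc funpow_Suc_right by (simp add: inv)
    then show ?thesis using Suc.IH Suc by simp
  qed
qed

lemma cont_int:
  assumes "continuous_on UNIV (G :: complex^'d \<Rightarrow> complex)"
  shows "(\<lambda>z. G (z + u) - G (z + u + v)) integrable_on cbox 0 One"
proof -
  have c1: "continuous_on UNIV (\<lambda>z. G (z + u))"
    by (rule continuous_on_compose2[OF assms]) (auto intro!: continuous_intros)
  have c2: "continuous_on UNIV (\<lambda>z. G (z + u + v))"
    by (rule continuous_on_compose2[OF assms]) (auto intro!: continuous_intros)
  show ?thesis
    by (rule integrable_continuous) (intro continuous_intros continuous_on_subset[OF c1] continuous_on_subset[OF c2], auto)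
qed

theorem mainTheorem9:
  fixes A :: "complex^'d^'d" and b :: "complex^'d"
  assumes "\<not> invertible A"
    and "bounded_comp_op (\<lambda>z. A *v z + b)"
  shows "\<not> cyclic_comp_op (\<lambda>z. A *v z + b)"
proof
  define \<phi> where "\<phi> = (\<lambda>z. A *v z + b)"
  assume "cyclic_comp_op (\<lambda>z. A *v z + b)"
  then obtain x where x: "x \<in> fock_space" and dense: "\<And>g \<epsilon>. g \<in> fock_space \<Longrightarrow> \<epsilon> > 0 \<Longrightarrow>
      \<exists>N (c::nat \<Rightarrow> complex). fock_norm (\<lambda>z. g z - (\<Sum>k<N. c k * x ((\<phi> ^^ k) z))) < \<epsilon>"
    unfolding cyclic_comp_op_def \<phi>_def by blast
  have bd: "bounded_comp_op \<phi>" using assms(2) unfolding \<phi>_def .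
  obtain v where v: "v \<noteq> 0" "A *v v = 0" using ker_exists[OF assms(1)] by blast
  then obtain j where j: "v $ j \<noteq> 0" by (metis vec_eq_iff zero_index)
  define a where "a = v $ j"
  have a0: "a \<noteq> 0" using j a_def by simp
  have inv: "\<And>y. \<phi> (y + v) = \<phi> y" unfolding \<phi>_def by (simp add: matrix_vector_right_distrib v)
  define S where "S = cbox (0::complex^'d) One"
  define e where "e = (axis j 1 :: complex^'d)"
  define L where "L u (F :: complex^'d \<Rightarrow> complex) = integral S (\<lambda>z. F (z + u) - F (z + u + v))" for u F
  have iter: "x \<circ> (\<phi> ^^ k) \<in> fock_space" for k
  proof (induction k)
    case 0 show ?case using x by simp
  next
    case (Suc k)
    have eq: "x \<circ> (\<phi> ^^ Suc k) = (x \<circ> (\<phi> ^^ k)) \<circ> \<phi>" by (simp only: funpow_Suc_right comp_assoc)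
    have "(x \<circ> (\<phi> ^^ k)) \<circ> \<phi> \<in> fock_space" using bd Suc unfolding bounded_comp_op_def by blast
    then show ?case by (simp only: eq)
  qed
  have cx: "continuous_on UNIV x" using fock_fin[OF x] unfolding fin_def by auto
  obtain M0 where M0: "\<And>F \<epsilon>. fin F \<Longrightarrow> \<epsilon> > 0 \<Longrightarrow> fock_norm F < \<epsilon> \<Longrightarrow> cmod (L 0 F) \<le> M0 * \<epsilon>"
    using ell_bound[of 0 v] unfolding L_def S_def by blast
  obtain Me where Me: "\<And>F \<epsilon>. fin F \<Longrightarrow> \<epsilon> > 0 \<Longrightarrow> fock_norm F < \<epsilon> \<Longrightarrow> cmod (L e F) \<le> Me * \<epsilon>"
    using ell_bound[of e v] unfolding L_def S_def by blast
  have approx: "\<exists>c. cmod (L 0 g - c * L 0 x) \<le> \<delta> \<and> cmod (L e g - c * L e x) \<le> \<delta>"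
    if g: "g \<in> fock_space" and d: "\<delta> > 0" for g \<delta>
  proof -
    define \<epsilon> where "\<epsilon> = \<delta> / (\<bar>M0\<bar> + \<bar>Me\<bar> + 1)"
    have e0: "\<epsilon> > 0" unfolding \<epsilon>_def using d by (simp add: add_nonneg_pos)
    obtain N c where Nc: "fock_norm (\<lambda>z. g z - (\<Sum>k<N. c k * x ((\<phi> ^^ k) z))) < \<epsilon>"
      using dense[OF g e0] by blast
    define F where "F = (\<lambda>z. g z - (\<Sum>k<N. c k * x ((\<phi> ^^ k) z)))"
    define c0 where "c0 = (if N = 0 then 0 else c 0)"
    have "fin (\<lambda>z. g z + (-1) * (\<Sum>k<N. c k * (x \<circ> (\<phi> ^^ k)) z))"
      by (intro fin_add fin_mult fin_sum fock_fin g iter)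
    hence finF: "fin F" unfolding F_def by simp
    have cg: "continuous_on UNIV g" using fock_fin[OF g] unfolding fin_def by auto
    have lin: "L u F = L u g - c0 * L u x" for u
    proof -
      have pw: "F y - F (y + v) = (g y - g (y + v)) - c0 * (x y - x (y + v))" for y
      proof -
        have sh: "(\<Sum>k<N. c k * x ((\<phi> ^^ k) (y + v))) =
         (\<Sum>k<N. c k * x ((\<phi> ^^ k) y)) - (if N = 0 then 0 else c 0 * (x y - x (y + v)))"
          by (rule sum_shift[where \<phi>=\<phi> and v=v, OF inv])
        show ?thesis unfolding F_def c0_def sh by (simp add: algebra_simps)
      qed
      have "L u F = integral S (\<lambda>z. (g (z + u) - g (z + u + v)) - c0 * (x (z + u) - x (z + u + v)))"
        unfolding L_def by (rule integral_cong) (rule pw)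
      also have "\<dots> = L u g - c0 * L u x" unfolding L_def S_def
        by (subst integral_diff) (auto intro: cont_int[OF cg] integrable_on_mult_right[OF cont_int[OF cx]])
      finally show ?thesis .
    qed
    have "cmod (L 0 F) \<le> M0 * \<epsilon>" "cmod (L e F) \<le> Me * \<epsilon>"
      using M0[OF finF e0] Me[OF finF e0] Nc unfolding F_def by auto
    moreover have "M0 * \<epsilon> \<le> \<delta>" "Me * \<epsilon> \<le> \<delta>"
    proof -
      have "M0 * \<epsilon> \<le> (\<bar>M0\<bar> + \<bar>Me\<bar> + 1) * \<epsilon>" "Me * \<epsilon> \<le> (\<bar>M0\<bar> + \<bar>Me\<bar> + 1) * \<epsilon>"
        using e0 by (intro mult_right_mono; linarith)+
      moreover have "(\<bar>M0\<bar> + \<bar>Me\<bar> + 1) * \<epsilon> = \<delta>" unfolding \<epsilon>_def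
        by (simp add: add_nonneg_pos)
      ultimately show "M0 * \<epsilon> \<le> \<delta>" "Me * \<epsilon> \<le> \<delta>" by auto
    qed
    ultimately show ?thesis using lin by (intro exI[of _ c0]) auto
  qed
  define g1 where "g1 = (\<lambda>z::complex^'d. z $ j)"
  define g2 where "g2 = (\<lambda>z::complex^'d. (z $ j)\<^sup>2)"
  have nl: "(norm z)\<^sup>2 \<le> 1 + norm z ^ 4" for z :: "complex^'d"
  proof -
    have "0 \<le> ((norm z)\<^sup>2 - 1)\<^sup>2" by simp
    moreover have "norm z ^ 4 = ((norm z)\<^sup>2)\<^sup>2" by (simp flip: power_mult)
    moreover have "0 \<le> (norm z)\<^sup>2" by simp
    ultimately show ?thesis unfolding power2_diff by (simp only: power_one mult_1_right)
  qed
  have g1f: "g1 \<in> fock_space"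
  proof -
    have "continuous_on UNIV g1" using entire_cont[OF entire_lin] unfolding g1_def .
    moreover have "(cmod (g1 z))\<^sup>2 \<le> 1 + norm z ^ 4" for z
    proof -
      have "(cmod (g1 z))\<^sup>2 \<le> (norm z)\<^sup>2" unfolding g1_def by (intro power_mono Finite_Cartesian_Product.norm_nth_le) auto
      thus ?thesis using nl[of z] by linarith
    qed
    ultimately show ?thesis unfolding fock_space_def using entire_lin[of j] fock_poly[OF cont_meas]
      unfolding g1_def by blast
  qed
  have g2f: "g2 \<in> fock_space"
  proof -
    have "continuous_on UNIV g2" using entire_cont[OF entire_sq] unfolding g2_def .
    moreover have "(cmod (g2 z))\<^sup>2 \<le> 1 + norm z ^ 4" for z
    proof -
      have "(cmod (g2 z))\<^sup>2 = cmod (z $ j) ^ 4" unfolding g2_def by (simp add: norm_power flip: power_mult)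
      also have "\<dots> \<le> norm z ^ 4" by (intro power_mono Finite_Cartesian_Product.norm_nth_le) auto
      finally show ?thesis by linarith
    qed
    ultimately show ?thesis unfolding fock_space_def using entire_sq[of j] fock_poly[OF cont_meas]
      unfolding g2_def by blast
  qed
  define cS where "cS = Henstock_Kurzweil_Integration.content S"
  have cS: "cS > 0" unfolding cS_def S_def by simp
  have cg1: "continuous_on UNIV g1" using g1f fock_fin unfolding fin_def by auto
  have cg2: "continuous_on UNIV g2" using g2f fock_fin unfolding fin_def by auto
  have Lg1: "L u g1 = - (of_real cS * a)" for u
  proof -
    have "L u g1 = integral S (\<lambda>z. - a)" unfolding L_def g1_def a_def by simp
    thus ?thesis unfolding S_def cS_def by (simp add: scaleR_conv_of_real)
  qed
  have Dg2: "L e g2 - L 0 g2 = - (2 * a * of_real cS)"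
  proof -
    have "L e g2 - L 0 g2 = integral S (\<lambda>z. (g2 (z + e) - g2 (z + e + v)) - (g2 (z + 0) - g2 (z + 0 + v)))"
      unfolding L_def S_def by (rule integral_diff[OF cont_int[OF cg2] cont_int[OF cg2], symmetric])
    also have "\<dots> = integral S (\<lambda>z. - (2 * a))"
      unfolding g2_def e_def a_def by (rule integral_cong) (simp add: power2_eq_square algebra_simps)
    finally show ?thesis unfolding S_def cS_def by (simp add: scaleR_conv_of_real)
  qed
  show False
  proof (rule alg[of "L 0 g1" "L e g2 - L 0 g2" "L 0 x" "L e x - L 0 x" "L 0 g2"])
    show "L 0 g1 \<noteq> 0" using Lg1 cS a0 by simp
    show "L e g2 - L 0 g2 \<noteq> 0" using Dg2 cS a0 by simp
  next
    fix \<delta> :: real assume d: "\<delta> > 0"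
    obtain c where c: "cmod (L 0 g1 - c * L 0 x) \<le> \<delta>/2" "cmod (L e g1 - c * L e x) \<le> \<delta>/2"
      using approx[OF g1f, of "\<delta>/2"] d by auto
    have "c * (L e x - L 0 x) = (L 0 g1 - c * L 0 x) - (L e g1 - c * L e x)" using Lg1 by (simp add: algebra_simps)
    hence "cmod (c * (L e x - L 0 x)) \<le> cmod (L 0 g1 - c * L 0 x) + cmod (L e g1 - c * L e x)"
      by (metis norm_triangle_ineq4)
    thus "\<exists>c. cmod (L 0 g1 - c * L 0 x) \<le> \<delta> \<and> cmod (c * (L e x - L 0 x)) \<le> \<delta>"
      using c norm_ge_zero[of "L 0 g1 - c * L 0 x"] norm_ge_zero[of "L e g1 - c * L e x"]
      by (intro exI[of _ c] conjI) linarith+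
  next
    fix \<delta> :: real assume d: "\<delta> > 0"
    obtain c where c: "cmod (L 0 g2 - c * L 0 x) \<le> \<delta>/2" "cmod (L e g2 - c * L e x) \<le> \<delta>/2"
      using approx[OF g2f, of "\<delta>/2"] d by auto
    have "(L e g2 - L 0 g2) - c * (L e x - L 0 x) = (L e g2 - c * L e x) - (L 0 g2 - c * L 0 x)" by (simp add: algebra_simps)
    hence "cmod ((L e g2 - L 0 g2) - c * (L e x - L 0 x)) \<le> cmod (L e g2 - c * L e x) + cmod (L 0 g2 - c * L 0 x)"
      by (metis norm_triangle_ineq4)
    thus "\<exists>c. cmod (L 0 g2 - c * L 0 x) \<le> \<delta> \<and> cmod ((L e g2 - L 0 g2) - c * (L e x - L 0 x)) \<le> \<delta>"
      using c norm_ge_zero[of "L 0 g2 - c * L 0 x"] norm_ge_zero[of "L e g2 - c * L e x"]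
      by (intro exI[of _ c] conjI) linarith+
  qed
qed


end
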